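(* Let $n\ge2$, $d\ge1$, $\tau>0$, $\sigma>0$, with $\mu^\star_1,\mu^\star_2\stackrel{\mathrm{i.i.d.}}{\sim}\mathcal N(0,\tau^2I_d)$, $\xi_1,\dots,\xi_n\stackrel{\mathrm{i.i.d.}}{\sim}\mathcal N(0,\sigma^2I_d)$ independent, fixed labels $z^\star_i\in\{1,2\}$ with both classes $S^\star_\ell=\{i:z^\star_i=\ell\}$ nonempty, $x_i=\mu^\star_{z^\star_i}+\xi_i$, and a fixed partition $\{C_1,C_2\}$ of $[n]$ into nonempty sets. Let $i\in S^\star_\ell$ and let $C_j$ be the cluster with $i\in C_j$, where $|C_j|\ge2$. Then $$\Delta_H^2(x_i,C_j)=\frac{|C_j|}{|C_j|-1}\|x_i-\widehat\mu_j\|^2\sim\eta\,\chi^2_d,\qquad \eta=2\tau^2\frac{|C_j|}{|C_j|-1}(1-R^\ell_j)^2+\sigma^2.$$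
   Context: $R^\ell_k=|C_k\cap S^\star_\ell|/|C_k|$; $\widehat\mu_k=|C_k|^{-1}\sum_{m\in C_k}x_m$. $\Delta_H^2$ is the Hartigan weighted distance, which for $i\in C_k$ equals $\frac{|C_k|}{|C_k|-1}\|x_i-\widehat\mu_k\|^2$. "$Y\sim a\chi^2_d$" means $Y/a$ is chi-squared with $d$ degrees of freedom. Randomness is over the centers and noise. *)

theory Defs
  imports "HOL-Probability.Probability"
begin

definition chi2_density :: "nat \<Rightarrow> real \<Rightarrow> real" where
  "chi2_density d y = (if y \<le> 0 then 0
     else y powr (real d / 2 - 1) * exp (- y / 2) / (2 powr (real d / 2) * Gamma (real d / 2)))"

text \<open>Empirical cluster mean, coordinatewise: points are given by coordinates x m k (k < d).\<close>
definition cluster_mean :: "(nat \<Rightarrow> nat \<Rightarrow> real) \<Rightarrow> nat set \<Rightarrow> nat \<Rightarrow> real" where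
  "cluster_mean x C k = (\<Sum>m\<in>C. x m k) / real (card C)"

definition hartigan_dist2 :: "nat \<Rightarrow> (nat \<Rightarrow> nat \<Rightarrow> real) \<Rightarrow> nat \<Rightarrow> nat set \<Rightarrow> real" where
  "hartigan_dist2 d x i C =
     real (card C) / (real (card C) - 1) * (\<Sum>k<d. (x i k - cluster_mean x C k)\<^sup>2)"

end

theory Submission
  imports Defs
begin


lemma chi2_density_nonneg: "0 \<le> chi2_density d y"
  unfolding chi2_density_def by (cases "d = 0") (auto intro!: divide_nonneg_pos mult_pos_pos)

lemma chi2_density_pos_eq:
  assumes "y > 0"
  shows "chi2_density d y = y powr (real d / 2 - 1) * exp (- y / 2) / (2 powr (real d / 2) * Gamma (real d / 2))"
  using assms unfolding chi2_density_def by simp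

lemma borel_measurable_chi2_density[measurable]: "chi2_density d \<in> borel_measurable borel"
  unfolding chi2_density_def by measurable

lemma Beta_nn:
  fixes p q :: real assumes "p > 0" "q > 0"
  shows "(\<integral>\<^sup>+s. ennreal ((1 - s) powr (p - 1) * s powr (q - 1) * indicator {0<..<1} s) \<partial>lborel) = ennreal (Beta q p)"
proof -
  have "(\<integral>\<^sup>+s\<in>{0..1}. ennreal (s powr (q - 1) * (1 - s) powr (p - 1)) \<partial>lborel) = ennreal (Beta q p)"
    by (rule nn_integral_has_integral_lebesgue'[OF _ has_integral_Beta_real]) (use assms in auto)
  moreover have "(\<integral>\<^sup>+s. ennreal ((1 - s) powr (p - 1) * s powr (q - 1) * indicator {0<..<1} s) \<partial>lborel)
     = (\<integral>\<^sup>+s\<in>{0..1}. ennreal (s powr (q - 1) * (1 - s) powr (p - 1)) \<partial>lborel)"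
    by (intro nn_integral_cong) (auto simp: indicator_def)
  ultimately show ?thesis by simp
qed

lemma conv_chi2_density:
  fixes a b :: nat assumes ab: "a > 0" "b > 0"
  shows "(\<lambda>x. \<integral>\<^sup>+y. ennreal (chi2_density a (x - y)) * ennreal (chi2_density b y) \<partial>lborel)
    = (\<lambda>x. ennreal (chi2_density (a + b) x))"
proof
  fix x :: real
  define p where "p = real a / 2"
  define q where "q = real b / 2"
  have pq: "p > 0" "q > 0" using ab by (auto simp: p_def q_def)
  have pqab: "real (a + b) / 2 = p + q" by (simp add: p_def q_def add_divide_distrib)
  show "(\<integral>\<^sup>+y. ennreal (chi2_density a (x - y)) * ennreal (chi2_density b y) \<partial>lborel) = ennreal (chi2_density (a + b) x)"
  proof (cases "x \<le> 0")
    case True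
    have z0: "\<And>y. ennreal (chi2_density a (x - y)) * ennreal (chi2_density b y) = 0"
      using True by (auto simp: chi2_density_def)
    have "(\<integral>\<^sup>+y. ennreal (chi2_density a (x - y)) * ennreal (chi2_density b y) \<partial>lborel) = 0"
      unfolding z0 by simp
    then show ?thesis using True by (simp add: chi2_density_def)
  next
    case False
    hence x: "x > 0" by simp
    define K where "K = exp (- x / 2) / (2 powr p * Gamma p * (2 powr q * Gamma q))"
    have K: "K \<ge> 0" unfolding K_def using pq by (auto intro!: divide_nonneg_pos)
    have "(\<integral>\<^sup>+y. ennreal (chi2_density a (x - y)) * ennreal (chi2_density b y) \<partial>lborel)
      = (\<integral>\<^sup>+y. ennreal K * ennreal ((x - y) powr (p - 1) * y powr (q - 1) * indicator {0<..<x} y) \<partial>lborel)"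
    proof (intro nn_integral_cong)
      fix y :: real
      show "ennreal (chi2_density a (x - y)) * ennreal (chi2_density b y) =
         ennreal K * ennreal ((x - y) powr (p - 1) * y powr (q - 1) * indicator {0<..<x} y)"
      proof (cases "0 < y \<and> y < x")
        case True
        have ee: "exp (- (x - y) / 2) * exp (- y / 2) = exp (- x / 2)"
          by (simp add: exp_add[symmetric] field_simps)
        have "chi2_density a (x - y) * chi2_density b y = K * ((x - y) powr (p - 1) * y powr (q - 1) * indicator {0<..<x} y)"
          using True unfolding chi2_density_def K_def p_def[symmetric] q_def[symmetric]
          by (simp add: indicator_def exp_add[symmetric] diff_divide_distrib)
        then show ?thesis
          by (simp add: chi2_density_nonneg K flip: ennreal_mult)
      next
        case False
        then show ?thesis by (auto simp: chi2_density_def indicator_def)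
      qed
    qed
    also have "\<dots> = ennreal K * (\<integral>\<^sup>+y. ennreal ((x - y) powr (p - 1) * y powr (q - 1) * indicator {0<..<x} y) \<partial>lborel)"
      by (rule nn_integral_cmult) measurable
    also have "(\<integral>\<^sup>+y. ennreal ((x - y) powr (p - 1) * y powr (q - 1) * indicator {0<..<x} y) \<partial>lborel)
      = ennreal x * (\<integral>\<^sup>+s. ennreal ((x - (0 + x * s)) powr (p - 1) * (0 + x * s) powr (q - 1) * indicator {0<..<x} (0 + x * s)) \<partial>lborel)"
      using nn_integral_real_affine[of "\<lambda>y. ennreal ((x - y) powr (p - 1) * y powr (q - 1) * indicator {0<..<x} y)" x 0] x
      by simp
    also have "(\<integral>\<^sup>+s. ennreal ((x - (0 + x * s)) powr (p - 1) * (0 + x * s) powr (q - 1) * indicator {0<..<x} (0 + x * s)) \<partial>lborel)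
      = (\<integral>\<^sup>+s. ennreal (x powr (p + q - 2)) * ennreal ((1 - s) powr (p - 1) * s powr (q - 1) * indicator {0<..<1} s) \<partial>lborel)"
    proof (intro nn_integral_cong)
      fix s :: real
      show "ennreal ((x - (0 + x * s)) powr (p - 1) * (0 + x * s) powr (q - 1) * indicator {0<..<x} (0 + x * s))
         = ennreal (x powr (p + q - 2)) * ennreal ((1 - s) powr (p - 1) * s powr (q - 1) * indicator {0<..<1} s)"
      proof (cases "0 < s \<and> s < 1")
        case True
        have e: "x - x * s = x * (1 - s)" by (simp add: algebra_simps)
        have "(x - x * s) powr (p - 1) * (x * s) powr (q - 1) = x powr (p + q - 2) * ((1 - s) powr (p - 1) * s powr (q - 1))"
        proof -
          have 1: "(x * (1 - s)) powr (p - 1) = x powr (p - 1) * (1 - s) powr (p - 1)"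
            using True x by (simp add: powr_mult)
          have 2: "(x * s) powr (q - 1) = x powr (q - 1) * s powr (q - 1)"
            using True x by (simp add: powr_mult)
          have 3: "x powr (p - 1) * x powr (q - 1) = x powr (p + q - 2)"
            by (simp add: powr_add[symmetric])
          show ?thesis unfolding e 1 2 3[symmetric] by (simp add: algebra_simps)
        qed
        moreover have "0 < x * s" "x * s < x" using True x by auto
        ultimately show ?thesis using True
          by (simp add: indicator_def flip: ennreal_mult)
      next
        case False
        then have "\<not> (0 < x * s \<and> x * s < x)" using x
          by (auto simp: zero_less_mult_iff)
        then show ?thesis using False by (auto simp: indicator_def)
      qed
    qed
    also have "\<dots> = ennreal (x powr (p + q - 2)) * ennreal (Beta q p)"
      by (subst nn_integral_cmult) (auto simp: Beta_nn pq)
    finally have eq1: "(\<integral>\<^sup>+y. ennreal (chi2_density a (x - y)) * ennreal (chi2_density b y) \<partial>lborel)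
       = ennreal K * (ennreal x * (ennreal (x powr (p + q - 2)) * ennreal (Beta q p)))" .
    have bpos: "Beta q p \<ge> 0" using pq by (simp add: Beta_def)
    have "(\<integral>\<^sup>+y. ennreal (chi2_density a (x - y)) * ennreal (chi2_density b y) \<partial>lborel)
       = ennreal (K * (x * (x powr (p + q - 2) * Beta q p)))"
      unfolding eq1 using x K bpos by (simp add: ennreal_mult)
    also have "K * (x * (x powr (p + q - 2) * Beta q p)) = chi2_density (a + b) x"
    proof -
      have g: "Gamma p > 0" "Gamma q > 0" "Gamma (p + q) > 0" using pq by auto
      have "x * x powr (p + q - 2) = x powr (p + q - 1)"
      proof -
        have "x powr (1 + (p + q - 2)) = x powr 1 * x powr (p + q - 2)" by (rule powr_add)
        moreover have "1 + (p + q - 2) = p + q - 1" by simp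
        ultimately show ?thesis using x by simp
      qed
      moreover have "2 powr p * 2 powr q = 2 powr (p + q)" by (simp add: powr_add)
      ultimately show ?thesis using x g
        unfolding chi2_density_pos_eq[OF x] pqab K_def Beta_def
        by (simp add: field_simps)
    qed
    finally show ?thesis .
  qed
qed



lemma chi1_sq:
  assumes x: "x > 0"
  shows "chi2_density 1 (x\<^sup>2) * (2 * x) = 2 * std_normal_density x"
proof -
  have a: "(x\<^sup>2) powr (real 1 / 2 - 1) = 1 / x"
  proof -
    have "(x\<^sup>2) powr (real 1 / 2 - 1) = (x\<^sup>2) powr (- (1/2))" by simp
    also have "\<dots> = inverse ((x\<^sup>2) powr (1/2))" by (rule powr_minus)
    also have "(x\<^sup>2) powr (1/2) = sqrt (x\<^sup>2)" by (rule powr_half_sqrt) simp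
    also have "inverse (sqrt (x\<^sup>2)) = 1 / x" using x by (simp add: divide_inverse)
    finally show ?thesis .
  qed
  have b: "2 powr (real 1 / 2) = sqrt 2" by (simp add: powr_half_sqrt)
  have c: "Gamma (real 1 / 2) = sqrt pi" using Gamma_one_half_real by simp
  have "chi2_density 1 (x\<^sup>2) = (1 / x) * exp (- x\<^sup>2 / 2) / (sqrt 2 * sqrt pi)"
    using x unfolding chi2_density_def a b c by simp
  then show ?thesis using x
    by (simp add: std_normal_density_def real_sqrt_mult field_simps)
qed

lemma std_normal_sym_half:
  fixes r :: real assumes r: "r \<ge> 0"
  shows "(\<integral>\<^sup>+x. ennreal (std_normal_density x * indicator {-r..r} x) \<partial>lborel)
     = (\<integral>\<^sup>+x. ennreal (2 * std_normal_density x * indicator {0<..r} x) \<partial>lborel)"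
proof -
  have split: "\<And>x. ennreal (std_normal_density x * indicator {-r..r} x)
     = ennreal (std_normal_density x * indicator {-r..0} x) + ennreal (std_normal_density x * indicator {0<..r} x)"
    by (auto simp: indicator_def simp flip: ennreal_plus)
  have "(\<integral>\<^sup>+x. ennreal (std_normal_density x * indicator {-r..r} x) \<partial>lborel)
     = (\<integral>\<^sup>+x. ennreal (std_normal_density x * indicator {-r..0} x) \<partial>lborel) + (\<integral>\<^sup>+x. ennreal (std_normal_density x * indicator {0<..r} x) \<partial>lborel)"
    unfolding split by (rule nn_integral_add) auto
  also have "(\<integral>\<^sup>+x. ennreal (std_normal_density x * indicator {-r..0} x) \<partial>lborel)
     = (\<integral>\<^sup>+x. ennreal (std_normal_density (0 + (-1) * x) * indicator {-r..0} (0 + (-1) * x)) \<partial>lborel)"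
    using nn_integral_real_affine[of "\<lambda>x. ennreal (std_normal_density x * indicator {-r..0} x)" "-1" 0]
    by simp
  also have "\<dots> = (\<integral>\<^sup>+x. ennreal (std_normal_density x * indicator {0..r} x) \<partial>lborel)"
    by (intro nn_integral_cong) (auto simp: std_normal_density_def indicator_def)
  also have "\<dots> = (\<integral>\<^sup>+x. ennreal (std_normal_density x * indicator {0<..r} x) \<partial>lborel)"
    by (intro nn_integral_cong_AE AE_I[of _ _ "{0}"]) (auto simp: indicator_def)
  also have "(\<integral>\<^sup>+x. ennreal (std_normal_density x * indicator {0<..r} x) \<partial>lborel) + (\<integral>\<^sup>+x. ennreal (std_normal_density x * indicator {0<..r} x) \<partial>lborel)
     = (\<integral>\<^sup>+x. ennreal (2 * std_normal_density x * indicator {0<..r} x) \<partial>lborel)"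
    by (subst nn_integral_add[symmetric]) (auto intro!: nn_integral_cong simp flip: ennreal_plus)
  finally show ?thesis .
qed

lemma chi1_cdf:
  fixes r :: real assumes r: "r \<ge> 0"
  shows "(\<integral>\<^sup>+t. ennreal (chi2_density 1 t) * indicator {..r\<^sup>2} t \<partial>lborel)
     = (\<integral>\<^sup>+x. ennreal (std_normal_density x * indicator {-r..r} x) \<partial>lborel)"
proof -
  have "(\<integral>\<^sup>+t. ennreal (chi2_density 1 t) * indicator {..r\<^sup>2} t \<partial>lborel)
      = (\<integral>\<^sup>+t. ennreal (chi2_density 1 t * indicator {0\<^sup>2..r\<^sup>2} t) \<partial>lborel)"
    by (intro nn_integral_cong) (auto simp: indicator_def chi2_density_def)
  also have "\<dots> = (\<integral>\<^sup>+x. ennreal (chi2_density 1 (x\<^sup>2) * (2 * x) * indicator {0..r} x) \<partial>lborel)"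
    by (rule nn_integral_substitution[where g = "\<lambda>x. x\<^sup>2" and g' = "\<lambda>x. 2 * x"])
       (use r borel_measurable_chi2_density[of 1] in \<open>auto intro!: derivative_eq_intros continuous_intros simp: set_borel_measurable_def\<close>)
  also have "\<dots> = (\<integral>\<^sup>+x. ennreal (2 * std_normal_density x * indicator {0<..r} x) \<partial>lborel)"
  proof (intro nn_integral_cong)
    fix x :: real
    show "ennreal (chi2_density 1 (x\<^sup>2) * (2 * x) * indicator {0..r} x) = ennreal (2 * std_normal_density x * indicator {0<..r} x)"
    proof (cases "0 < x \<and> x \<le> r")
      case True
      have i: "indicator {0..r} x = (1::real)" "indicator {0<..r} x = (1::real)" using True by auto
      show ?thesis unfolding i mult_1_right chi1_sq[OF conjunct1[OF True]] ..
    next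
      case False
      then show ?thesis by (cases "x = 0") (auto simp: indicator_def)
    qed
  qed
  also have "\<dots> = (\<integral>\<^sup>+x. ennreal (std_normal_density x * indicator {-r..r} x) \<partial>lborel)"
    by (rule std_normal_sym_half[OF r, symmetric])
  finally show ?thesis .
qed



context prob_space begin

lemma std_normal_sq:
  assumes Z: "distributed M lborel Z std_normal_density"
  shows "distributed M lborel (\<lambda>\<omega>. (Z \<omega>)\<^sup>2) (chi2_density 1)"
proof (rule distributedI_borel_atMost[where g = "\<lambda>a. measure M {\<omega>\<in>space M. (Z \<omega>)\<^sup>2 \<le> a}"])
  have Zm[measurable]: "Z \<in> borel_measurable M" using distributed_measurable[OF Z] by simp
  show "(\<lambda>\<omega>. (Z \<omega>)\<^sup>2) \<in> borel_measurable M" by measurable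
  show "chi2_density 1 \<in> borel_measurable borel" by measurable
  show "AE x in lborel. 0 \<le> chi2_density 1 x" by (simp add: chi2_density_nonneg)
  fix a :: real
  show "emeasure M {x \<in> space M. (Z x)\<^sup>2 \<le> a} = ennreal (measure M {\<omega> \<in> space M. (Z \<omega>)\<^sup>2 \<le> a})"
    by (simp add: emeasure_eq_measure)
  have "(\<integral>\<^sup>+x. ennreal (chi2_density 1 x) * indicator {..a} x \<partial>lborel) = emeasure M {\<omega> \<in> space M. (Z \<omega>)\<^sup>2 \<le> a}"
  proof (cases "a < 0")
    case True
    have e1: "{\<omega> \<in> space M. (Z \<omega>)\<^sup>2 \<le> a} = {}" using True
      by (auto simp: not_le) (smt (verit) zero_le_power2)
    have e2: "\<And>x. ennreal (chi2_density 1 x) * indicator {..a} x = 0"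
      using True by (auto simp: chi2_density_def indicator_def)
    show ?thesis unfolding e1 e2 by simp
  next
    case False
    define r where "r = sqrt a"
    have r: "r \<ge> 0" "r\<^sup>2 = a" using False by (auto simp: r_def)
    have "{\<omega> \<in> space M. (Z \<omega>)\<^sup>2 \<le> a} = Z -` {-r..r} \<inter> space M"
      using r by (auto simp flip: abs_le_square_iff)
    then have "emeasure M {\<omega> \<in> space M. (Z \<omega>)\<^sup>2 \<le> a} = (\<integral>\<^sup>+x. ennreal (std_normal_density x) * indicator {-r..r} x \<partial>lborel)"
      using distributed_emeasure[OF Z, of "{-r..r}"] by simp
    also have "\<dots> = (\<integral>\<^sup>+x. ennreal (std_normal_density x * indicator {-r..r} x) \<partial>lborel)"
      by (intro nn_integral_cong) (auto simp: indicator_def)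
    also have "\<dots> = (\<integral>\<^sup>+t. ennreal (chi2_density 1 t) * indicator {..r\<^sup>2} t \<partial>lborel)"
      by (rule chi1_cdf[OF r(1), symmetric])
    finally show ?thesis using r by simp
  qed
  moreover have "(\<integral>\<^sup>+x. ennreal (chi2_density 1 x * indicator {..a} x) \<partial>lborel) = (\<integral>\<^sup>+x. ennreal (chi2_density 1 x) * indicator {..a} x \<partial>lborel)"
    by (intro nn_integral_cong) (auto simp: indicator_def)
  ultimately show "(\<integral>\<^sup>+x. ennreal (chi2_density 1 x * indicator {..a} x) \<partial>lborel) = ennreal (measure M {\<omega> \<in> space M. (Z \<omega>)\<^sup>2 \<le> a})"
    by (simp add: emeasure_eq_measure)
qed

lemma sum_indep_chi2:
  assumes indep: "indep_var borel X borel Y" and ab: "a > 0" "b > 0"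
    and X: "distributed M lborel X (chi2_density a)"
    and Y: "distributed M lborel Y (chi2_density b)"
  shows "distributed M lborel (\<lambda>x. X x + Y x) (chi2_density (a + b))"
  using distributed_convolution[OF indep X Y] conv_chi2_density[OF ab] by simp

lemma chi2_distributed_sum:
  assumes "finite I" "I \<noteq> {}" "indep_vars (\<lambda>_. borel) X I"
    and "\<And>i. i \<in> I \<Longrightarrow> distributed M lborel (X i) (chi2_density 1)"
  shows "distributed M lborel (\<lambda>\<omega>. \<Sum>i\<in>I. X i \<omega>) (chi2_density (card I))"
  using assms
proof (induct I rule: finite_ne_induct)
  case (singleton i) then show ?case by auto
next
  case (insert i I)
  have ind: "indep_var borel (X i) borel (\<lambda>\<omega>. \<Sum>i\<in>I. X i \<omega>)"
    using insert by (intro indep_vars_sum) auto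
  have IH: "distributed M lborel (\<lambda>\<omega>. \<Sum>i\<in>I. X i \<omega>) (chi2_density (card I))"
    using insert by (auto intro: indep_vars_subset)
  have "card I > 0" using insert by (simp add: card_gt_0_iff)
  then have "distributed M lborel (\<lambda>\<omega>. X i \<omega> + (\<Sum>i\<in>I. X i \<omega>)) (chi2_density (1 + card I))"
    using sum_indep_chi2[OF ind _ _ _ IH, of 1] insert by auto
  then show ?case using insert by simp
qed

lemma lin_comb_normal:
  fixes W :: "'i \<Rightarrow> 'a \<Rightarrow> real"
  assumes I: "finite I" and ind: "indep_vars (\<lambda>_. borel) W I"
    and W: "\<And>t. t \<in> I \<Longrightarrow> distributed M lborel (W t) (normal_density 0 (s t))"
    and s: "\<And>t. t \<in> I \<Longrightarrow> s t > 0"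
    and t0: "t0 \<in> I" "a t0 \<noteq> 0"
  shows "distributed M lborel (\<lambda>\<omega>. \<Sum>t\<in>I. a t * W t \<omega>) (normal_density 0 (sqrt (\<Sum>t\<in>I. (a t)\<^sup>2 * (s t)\<^sup>2)))"
proof -
  define J where "J = {t\<in>I. a t \<noteq> 0}"
  have J: "finite J" "J \<noteq> {}" "J \<subseteq> I" using I t0 by (auto simp: J_def)
  have indJ: "indep_vars (\<lambda>_. borel) (\<lambda>t \<omega>. a t * W t \<omega>) J"
    by (rule indep_vars_compose2[OF indep_vars_subset[OF ind J(3)]]) auto
  have WJ: "distributed M lborel (\<lambda>\<omega>. a t * W t \<omega>) (normal_density 0 (\<bar>a t\<bar> * s t))" if "t \<in> J" for t
    using normal_density_affine[OF W[of t] s[of t], of "a t" 0] that by (auto simp: J_def)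
  have "distributed M lborel (\<lambda>\<omega>. \<Sum>t\<in>J. a t * W t \<omega>) (normal_density (\<Sum>t\<in>J. 0) (sqrt (\<Sum>t\<in>J. (\<bar>a t\<bar> * s t)\<^sup>2)))"
    by (rule sum_indep_normal[OF J(1,2) indJ _ WJ]) (use s J in \<open>auto simp: J_def\<close>)
  moreover have "\<And>\<omega>. (\<Sum>t\<in>J. a t * W t \<omega>) = (\<Sum>t\<in>I. a t * W t \<omega>)"
    by (rule sum.mono_neutral_left) (use I in \<open>auto simp: J_def\<close>)
  moreover have "(\<Sum>t\<in>J. (\<bar>a t\<bar> * s t)\<^sup>2) = (\<Sum>t\<in>I. (a t)\<^sup>2 * (s t)\<^sup>2)"
    by (rule sum.mono_neutral_cong_left) (use I in \<open>auto simp: J_def power_mult_distrib\<close>)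
  ultimately show ?thesis by simp
qed

end

theorem corollaryD2:
  fixes M :: "'a measure"
    and n d :: nat and \<tau> \<sigma> :: real
    and mu :: "nat \<Rightarrow> nat \<Rightarrow> 'a \<Rightarrow> real"
    and xi :: "nat \<Rightarrow> nat \<Rightarrow> 'a \<Rightarrow> real"
    and z :: "nat \<Rightarrow> nat" and C :: "nat \<Rightarrow> nat set"
    and i j ll :: nat
  assumes "prob_space M"
    and "n \<ge> 2" and "d \<ge> 1" and "\<tau> > 0" and "\<sigma> > 0"
    and indep: "prob_space.indep_vars M (\<lambda>_. borel)
        (\<lambda>t. case t of Inl (l, k) \<Rightarrow> mu l k | Inr (m, k) \<Rightarrow> xi m k)
        (Inl ` ({1, 2} \<times> {..<d}) \<union> Inr ` ({1..n} \<times> {..<d}))"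
    and mu_distr: "\<And>l k. l \<in> {1, 2} \<Longrightarrow> k < d \<Longrightarrow>
        distributed M lborel (mu l k) (normal_density 0 \<tau>)"
    and xi_distr: "\<And>m k. m \<in> {1..n} \<Longrightarrow> k < d \<Longrightarrow>
        distributed M lborel (xi m k) (normal_density 0 \<sigma>)"
    and z_range: "\<And>m. m \<in> {1..n} \<Longrightarrow> z m \<in> {1, 2}"
    and classes_nonempty: "\<And>l. l \<in> {1, 2} \<Longrightarrow> {m \<in> {1..n}. z m = l} \<noteq> {}"
    and partition: "C 1 \<union> C 2 = {1..n}" "C 1 \<inter> C 2 = {}" "C 1 \<noteq> {}" "C 2 \<noteq> {}"
    and "i \<in> {1..n}" and "z i = ll"
    and "j \<in> {1, 2}" and "i \<in> C j" and "card (C j) \<ge> 2"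
  shows "let x = (\<lambda>\<omega> m k. mu (z m) k \<omega> + xi m k \<omega>);
             c = real (card (C j));
             R = real (card (C j \<inter> {m \<in> {1..n}. z m = ll})) / c;
             \<eta> = 2 * \<tau>\<^sup>2 * (c / (c - 1)) * (1 - R)\<^sup>2 + \<sigma>\<^sup>2
         in distributed M lborel (\<lambda>\<omega>. hartigan_dist2 d (x \<omega>) i (C j) / \<eta>) (chi2_density d)"
proof -
  interpret P: prob_space M by fact
  have tau: "\<tau> > 0" and sig: "\<sigma> > 0" and d1: "d \<ge> 1" using assms(3,4,5) by auto
  have iN: "i \<in> {1..n}" and zi: "z i = ll" and j12: "j \<in> {1, 2}" and iCj: "i \<in> C j"
    and cardC: "card (C j) \<ge> 2" using assms(15-19) by auto
  define Cj where "Cj = C j"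
  define c where "c = real (card Cj)"
  define S where "S = {m \<in> {1..n}. z m = ll}"
  define A where "A = card (Cj \<inter> S)"
  define R where "R = real A / c"
  define l2 where "l2 = (3::nat) - ll"
  define W where "W = (\<lambda>t::(nat \<times> nat) + (nat \<times> nat). case t of Inl (l, k) \<Rightarrow> mu l k | Inr (m, k) \<Rightarrow> xi m k)"
  define I where "I = Inl ` ({1::nat, 2} \<times> {..<d}) \<union> Inr ` ({1..n} \<times> {..<d})"
  define s where "s = (\<lambda>t::(nat \<times> nat) + (nat \<times> nat). case t of Inl _ \<Rightarrow> \<tau> | Inr _ \<Rightarrow> \<sigma>)"
  define a where "a = (\<lambda>t::(nat \<times> nat) + (nat \<times> nat). case t of
      Inl (l, k) \<Rightarrow> (if l = ll then 1 - R else - (1 - R))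
    | Inr (m, k) \<Rightarrow> (if m = i then 1 - 1 / c else - (1 / c)))"
  define T where "T = (\<lambda>k::nat. (\<lambda>l. Inl (l, k)) ` {ll, l2} \<union> (\<lambda>m. Inr (m, k)) ` Cj)"
  define x where "x = (\<lambda>\<omega> m k. mu (z m) k \<omega> + xi m k \<omega>)"
  define Y where "Y = (\<lambda>k \<omega>. x \<omega> i k - cluster_mean (x \<omega>) Cj k)"
  define v where "v = 2 * \<tau>\<^sup>2 * (1 - R)\<^sup>2 + \<sigma>\<^sup>2 * ((c - 1) / c)"

  have Cj_sub: "Cj \<subseteq> {1..n}" using partition(1) j12 by (auto simp: Cj_def)
  have finCj: "finite Cj" using Cj_sub finite_subset by blast
  have iC: "i \<in> Cj" using iCj by (simp add: Cj_def)
  have c2: "c \<ge> 2" using cardC by (simp add: c_def Cj_def)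
  have ll12: "ll \<in> {1, 2}" using z_range[OF iN] zi by simp
  have l2: "l2 \<in> {1, 2}" "l2 \<noteq> ll" "{ll, l2} = {1, 2}" using ll12 by (auto simp: l2_def)
  have zC: "\<And>m. m \<in> Cj \<Longrightarrow> z m \<noteq> ll \<Longrightarrow> z m = l2"
    using z_range Cj_sub ll12 by (fastforce simp: l2_def)
  have AC: "A \<le> card Cj" unfolding A_def by (rule card_mono[OF finCj]) auto

  have Y_eq: "Y k \<omega> = (\<Sum>t\<in>T k. a t * W t \<omega>)" for k \<omega>
  proof -
    have sumT: "(\<Sum>t\<in>T k. a t * W t \<omega>) = (\<Sum>l\<in>{ll, l2}. a (Inl (l, k)) * W (Inl (l, k)) \<omega>)
       + (\<Sum>m\<in>Cj. a (Inr (m, k)) * W (Inr (m, k)) \<omega>)"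
      unfolding T_def using finCj l2(2)
      by (subst sum.union_disjoint) (auto simp: sum.reindex inj_on_def)
    have s1: "(\<Sum>l\<in>{ll, l2}. a (Inl (l, k)) * W (Inl (l, k)) \<omega>) = (1 - R) * mu ll k \<omega> - (1 - R) * mu l2 k \<omega>"
      using l2(2) by (simp add: a_def W_def algebra_simps)
    have s2: "(\<Sum>m\<in>Cj. a (Inr (m, k)) * W (Inr (m, k)) \<omega>) = xi i k \<omega> - (\<Sum>m\<in>Cj. xi m k \<omega>) / c"
    proof -
      have "(\<Sum>m\<in>Cj. a (Inr (m, k)) * W (Inr (m, k)) \<omega>) = (\<Sum>m\<in>Cj. (if m = i then xi i k \<omega> else 0) - xi m k \<omega> / c)"
        by (intro sum.cong) (auto simp: a_def W_def algebra_simps)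
      also have "\<dots> = xi i k \<omega> - (\<Sum>m\<in>Cj. xi m k \<omega>) / c"
        using finCj iC by (simp add: sum_subtractf sum_divide_distrib)
      finally show ?thesis .
    qed
    have smu: "(\<Sum>m\<in>Cj. mu (z m) k \<omega>) = real A * mu ll k \<omega> + (c - real A) * mu l2 k \<omega>"
    proof -
      have "(\<Sum>m\<in>Cj. mu (z m) k \<omega>) = (\<Sum>m\<in>Cj \<inter> S. mu (z m) k \<omega>) + (\<Sum>m\<in>Cj - S. mu (z m) k \<omega>)"
        using finCj by (metis sum.Int_Diff)
      also have "(\<Sum>m\<in>Cj \<inter> S. mu (z m) k \<omega>) = (\<Sum>m\<in>Cj \<inter> S. mu ll k \<omega>)"
        by (intro sum.cong) (auto simp: S_def)
      also have "(\<Sum>m\<in>Cj - S. mu (z m) k \<omega>) = (\<Sum>m\<in>Cj - S. mu l2 k \<omega>)"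
        using Cj_sub zC by (intro sum.cong) (auto simp: S_def)
      also have "card (Cj - S) = card Cj - A"
        unfolding A_def using finCj by (simp add: card_Diff_subset_Int)
      ultimately show ?thesis using AC by (simp add: A_def c_def of_nat_diff)
    qed
    have cpos: "c > 0" using c2 by simp
    show ?thesis
      unfolding sumT s1 s2 Y_def x_def cluster_mean_def sum.distrib smu
      using cpos zi by (simp add: R_def c_def[symmetric] field_simps)
  qed
  have cpos: "c > 0" using c2 by simp
  have vpos: "v > 0" unfolding v_def using c2 sig
    by (intro add_nonneg_pos) (auto intro!: mult_pos_pos divide_pos_pos)
  have TI: "T k \<subseteq> I" if "k < d" for k
    using that l2(1) ll12 Cj_sub by (auto simp: T_def I_def)
  have finT: "finite (T k)" for k using finCj by (simp add: T_def)
  have indW: "P.indep_vars (\<lambda>_. borel) W I"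
    using indep unfolding W_def I_def .
  have Wd: "distributed M lborel (W t) (normal_density 0 (s t))" if "t \<in> I" for t
    using that mu_distr xi_distr by (auto simp: W_def s_def I_def)
  have spos: "s t > 0" for t using tau sig by (simp add: s_def split: sum.split)
  have var: "(\<Sum>t\<in>T k. (a t)\<^sup>2 * (s t)\<^sup>2) = v" for k
  proof -
    have "(\<Sum>t\<in>T k. (a t)\<^sup>2 * (s t)\<^sup>2) = (\<Sum>l\<in>{ll, l2}. (a (Inl (l, k)))\<^sup>2 * (s (Inl (l, k)))\<^sup>2)
       + (\<Sum>m\<in>Cj. (a (Inr (m, k)))\<^sup>2 * (s (Inr (m, k)))\<^sup>2)"
      unfolding T_def using finCj l2(2)
      by (subst sum.union_disjoint) (auto simp: sum.reindex inj_on_def)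
    also have "(\<Sum>l\<in>{ll, l2}. (a (Inl (l, k)))\<^sup>2 * (s (Inl (l, k)))\<^sup>2) = 2 * \<tau>\<^sup>2 * (1 - R)\<^sup>2"
      using l2(2) by (simp add: a_def s_def power2_eq_square algebra_simps)
    also have "(\<Sum>m\<in>Cj. (a (Inr (m, k)))\<^sup>2 * (s (Inr (m, k)))\<^sup>2)
        = (1 - 1 / c)\<^sup>2 * \<sigma>\<^sup>2 + (\<Sum>m\<in>Cj - {i}. (1 / c)\<^sup>2 * \<sigma>\<^sup>2)"
      using finCj iC by (simp add: sum.remove a_def s_def power2_eq_square)
    also have "(\<Sum>m\<in>Cj - {i}. (1 / c)\<^sup>2 * \<sigma>\<^sup>2) = (c - 1) * ((1 / c)\<^sup>2 * \<sigma>\<^sup>2)"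
    proof -
      have "card Cj \<ge> 1" using finCj iC by (metis One_nat_def card_0_eq empty_iff less_one not_less)
      then show ?thesis using finCj iC by (simp add: c_def of_nat_diff)
    qed
    finally have eq: "(\<Sum>t\<in>T k. (a t)\<^sup>2 * (s t)\<^sup>2) = 2 * \<tau>\<^sup>2 * (1 - R)\<^sup>2 + ((1 - 1 / c)\<^sup>2 * \<sigma>\<^sup>2 + (c - 1) * ((1 / c)\<^sup>2 * \<sigma>\<^sup>2))" .
    have "(1 - 1 / c)\<^sup>2 * \<sigma>\<^sup>2 + (c - 1) * ((1 / c)\<^sup>2 * \<sigma>\<^sup>2) = \<sigma>\<^sup>2 * ((c - 1) / c)"
      using cpos by (simp add: field_simps power2_eq_square)
    then show ?thesis unfolding eq v_def by simp
  qed
  have Ynorm: "distributed M lborel (Y k) (normal_density 0 (sqrt v))" if k: "k < d" for k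
  proof -
    have "distributed M lborel (\<lambda>\<omega>. \<Sum>t\<in>T k. a t * W t \<omega>) (normal_density 0 (sqrt (\<Sum>t\<in>T k. (a t)\<^sup>2 * (s t)\<^sup>2)))"
    proof (rule P.lin_comb_normal[OF finT P.indep_vars_subset[OF indW TI[OF k]]])
      show "\<And>t. t \<in> T k \<Longrightarrow> distributed M lborel (W t) (normal_density 0 (s t))"
        using Wd TI[OF k] by blast
      show "\<And>t. 0 < s t" by (rule spos)
      show "Inr (i, k) \<in> T k" using iC by (simp add: T_def)
      show "a (Inr (i, k)) \<noteq> 0" using c2 by (simp add: a_def)
    qed
    moreover have "(\<lambda>\<omega>. \<Sum>t\<in>T k. a t * W t \<omega>) = Y k" by (rule ext) (simp add: Y_eq)
    ultimately show ?thesis by (simp add: var)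
  qed
  define F where "F = (\<lambda>k (f :: (nat \<times> nat) + (nat \<times> nat) \<Rightarrow> real). ((\<Sum>t\<in>T k. a t * f t) / sqrt v)\<^sup>2)"
  have indR: "P.indep_vars (\<lambda>k. PiM (T k) (\<lambda>_. borel)) (\<lambda>k \<omega>. restrict (\<lambda>t. W t \<omega>) (T k)) {..<d}"
  proof (rule P.indep_vars_restrict[OF indW])
    show "\<And>k. k \<in> {..<d} \<Longrightarrow> T k \<subseteq> I" using TI by auto
    show "disjoint_family_on T {..<d}" by (auto simp: disjoint_family_on_def T_def)
  qed
  have Fm: "F k \<in> measurable (PiM (T k) (\<lambda>_. borel)) borel" for k
    unfolding F_def by (intro borel_measurable_power borel_measurable_divide borel_measurable_sum
        borel_measurable_times borel_measurable_const measurable_component_singleton) auto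
  have indF: "P.indep_vars (\<lambda>_. borel) (\<lambda>k \<omega>. F k (restrict (\<lambda>t. W t \<omega>) (T k))) {..<d}"
    by (rule P.indep_vars_compose2[OF indR Fm])
  have Feq: "F k (restrict (\<lambda>t. W t \<omega>) (T k)) = (Y k \<omega> / sqrt v)\<^sup>2" for k \<omega>
    unfolding F_def Y_eq by (simp cong: sum.cong)
  have indY: "P.indep_vars (\<lambda>_. borel) (\<lambda>k \<omega>. (Y k \<omega> / sqrt v)\<^sup>2) {..<d}"
    using indF by (simp add: Feq)
  have chi1: "distributed M lborel (\<lambda>\<omega>. (Y k \<omega> / sqrt v)\<^sup>2) (chi2_density 1)" if "k \<in> {..<d}" for k
  proof -
    have "distributed M lborel (\<lambda>\<omega>. 0 + (1 / sqrt v) * Y k \<omega>) (normal_density (0 + (1 / sqrt v) * 0) (\<bar>1 / sqrt v\<bar> * sqrt v))"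
      by (rule P.normal_density_affine[OF Ynorm]) (use that vpos in auto)
    then have "distributed M lborel (\<lambda>\<omega>. Y k \<omega> / sqrt v) std_normal_density"
      using vpos by simp
    then show ?thesis by (rule P.std_normal_sq)
  qed
  have sumd: "distributed M lborel (\<lambda>\<omega>. \<Sum>k\<in>{..<d}. (Y k \<omega> / sqrt v)\<^sup>2) (chi2_density (card {..<d}))"
  proof (rule P.chi2_distributed_sum[OF _ _ indY chi1])
    show "{..<d} \<noteq> {}" using d1 by (metis lessThan_iff less_le_trans not_one_le_zero zero_less_one emptyE)
  qed auto
  have eta: "2 * \<tau>\<^sup>2 * (c / (c - 1)) * (1 - R)\<^sup>2 + \<sigma>\<^sup>2 = (c / (c - 1)) * v"
    unfolding v_def using c2 by (simp add: field_simps)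
  have fun_eq: "(\<lambda>\<omega>. hartigan_dist2 d (x \<omega>) i Cj / ((c / (c - 1)) * v)) = (\<lambda>\<omega>. \<Sum>k\<in>{..<d}. (Y k \<omega> / sqrt v)\<^sup>2)"
  proof
    fix \<omega>
    have cc: "c / (c - 1) > 0" using c2 by simp
    have "hartigan_dist2 d (x \<omega>) i Cj = (c / (c - 1)) * (\<Sum>k<d. (Y k \<omega>)\<^sup>2)"
      unfolding hartigan_dist2_def Y_def c_def ..
    then show "hartigan_dist2 d (x \<omega>) i Cj / ((c / (c - 1)) * v) = (\<Sum>k\<in>{..<d}. (Y k \<omega> / sqrt v)\<^sup>2)"
      using cc vpos c2 by (simp add: power_divide sum_divide_distrib)
  qed
  have E: "(\<lambda>\<omega>. hartigan_dist2 d (x \<omega>) i Cj / (2 * \<tau>\<^sup>2 * (c / (c - 1)) * (1 - R)\<^sup>2 + \<sigma>\<^sup>2))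
      = (\<lambda>\<omega>. \<Sum>k\<in>{..<d}. (Y k \<omega> / sqrt v)\<^sup>2)"
    unfolding eta by (rule fun_eq)
  have "distributed M lborel (\<lambda>\<omega>. hartigan_dist2 d (x \<omega>) i Cj / (2 * \<tau>\<^sup>2 * (c / (c - 1)) * (1 - R)\<^sup>2 + \<sigma>\<^sup>2)) (chi2_density d)"
    unfolding E using sumd by simp
  then show ?thesis
    unfolding Let_def x_def c_def Cj_def R_def A_def S_def .
qed

end
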